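(* There is $d_0$ such that for all $d\ge d_0$, $A_{d,2d}\big(t\mapsto\psi_{3d}(\sqrt d\,t)\big)\ge\frac{1}{5e\pi}$.
   Context: $\mu_d$ is the probability measure on $[-1,1]$ with density $\frac{\Gamma(d/2)}{\sqrt\pi\,\Gamma((d-1)/2)}(1-t^2)^{(d-3)/2}$. $A_{d,n}(g)=\min_p\|g-p\|_{L^2(\mu_d)}$ over polynomials $p$ of degree less than $n$. The sawtooth $\psi_n:\mathbb{R}\to[-1,1]$ is $\psi_n(t)=-2n[t+1]_++2n[t-1]_++4n\sum_{j=1}^n\big((-1)^{j+n+1}[t-\tfrac{2j-1}{2n}]_++(-1)^{j+n}[t+\tfrac{2j-1}{2n}]_+\big)$ ($n$ cycles in $[-1,1]$, zero outside). *)

theory Defs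
  imports "HOL-Analysis.Analysis" "HOL-Computational_Algebra.Polynomial"
begin

definition pos_part :: "real \<Rightarrow> real" where
  "pos_part x = max x 0"

definition mu_dens :: "nat \<Rightarrow> real \<Rightarrow> real" where
  "mu_dens d t = Gamma (real d / 2) / (sqrt pi * Gamma ((real d - 1) / 2))
                 * (1 - t\<^sup>2) powr ((real d - 3) / 2)"

definition mu :: "nat \<Rightarrow> real measure" where
  "mu d = density lborel (\<lambda>t. ennreal (indicator {-1..1} t * mu_dens d t))"

definition A :: "nat \<Rightarrow> nat \<Rightarrow> (real \<Rightarrow> real) \<Rightarrow> real" where
  "A d n g = (INF p \<in> {p :: real poly. degree p < n}.
                sqrt (integral\<^sup>L (mu d) (\<lambda>t. (g t - poly p t)\<^sup>2)))"

definition psi :: "nat \<Rightarrow> real \<Rightarrow> real" where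
  "psi n t = - 2 * real n * pos_part (t + 1) + 2 * real n * pos_part (t - 1)
     + 4 * real n * (\<Sum>j=1..n.
         (-1) ^ (j + n + 1) * pos_part (t - (2 * real j - 1) / (2 * real n))
       + (-1) ^ (j + n) * pos_part (t + (2 * real j - 1) / (2 * real n)))"

end

theory Submission
  imports Defs
begin


lemma pp_conv:
  fixes x y l e :: real
  assumes "0 \<le> l" "l \<le> 1" "x \<le> y" "y + e \<le> 0 \<or> 0 \<le> x + e"
  shows "pos_part ((1-l)*x + l*y + e) = (1-l)*pos_part (x+e) + l*pos_part (y+e)"
proof -
  have eq: "(1-l)*x + l*y + e = (1-l)*(x+e) + l*(y+e)" by (simp add: algebra_simps)
  consider "y + e \<le> 0" | "0 \<le> x + e" using assms(4) by blast
  then show ?thesis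
  proof cases
    case 1
    have "(1-l)*(x+e) \<le> 0" using 1 assms by (intro mult_nonneg_nonpos) auto
    moreover have "l*(y+e) \<le> 0" using 1 assms by (intro mult_nonneg_nonpos) auto
    ultimately show ?thesis using 1 assms unfolding eq pos_part_def by auto
  next
    case 2
    have "(1-l)*(x+e) \<ge> 0" using 2 assms by (intro mult_nonneg_nonneg) auto
    moreover have "l*(y+e) \<ge> 0" using 2 assms by (intro mult_nonneg_nonneg) auto
    ultimately show ?thesis using 2 assms unfolding eq pos_part_def by auto
  qed
qed

lemma pp_conv':
  fixes x y l e :: real
  assumes "0 \<le> l" "l \<le> 1" "x \<le> y" "y - e \<le> 0 \<or> 0 \<le> x - e"
  shows "pos_part ((1-l)*x + l*y - e) = (1-l)*pos_part (x-e) + l*pos_part (y-e)"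
  using pp_conv[OF assms(1-3), of "-e"] assms(4) by simp

definition bb :: "nat \<Rightarrow> int \<Rightarrow> real" where
  "bb n m = (2 * real_of_int m - 1) / (2 * real n)"

lemma psi_conv:
  assumes n: "n \<ge> 1" and m: "1 - int n \<le> m" "m \<le> int n - 1"
    and l: "0 \<le> l" "l \<le> 1"
  shows "psi n ((1-l)*bb n m + l*bb n (m+1)) = (1-l)*psi n (bb n m) + l*psi n (bb n (m+1))"
proof -
  define x where "x = bb n m"
  define y where "y = bb n (m+1)"
  have np: "real n > 0" using n by simp
  have xy: "x \<le> y" unfolding x_def y_def bb_def using np by (intro divide_right_mono) auto
  have c1: "y - 1 \<le> 0 \<or> 0 \<le> x - 1"
  proof -
    have "2 * real_of_int m + 1 \<le> 2 * real n" using m by linarith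
    then have "y \<le> 1" unfolding y_def bb_def using np by (simp add: field_simps)
    then show ?thesis by simp
  qed
  have c2: "y + 1 \<le> 0 \<or> 0 \<le> x + 1"
  proof -
    have "2 * real_of_int m - 1 \<ge> - 2 * real n" using m by linarith
    then have "x \<ge> -1" unfolding x_def bb_def using np by (simp add: field_simps)
    then show ?thesis by simp
  qed
  have c3: "y - (2 * real j - 1) / (2 * real n) \<le> 0 \<or> 0 \<le> x - (2 * real j - 1) / (2 * real n)" for j
  proof (cases "int j \<le> m")
    case True
    then have "2 * real_of_int m - 1 \<ge> 2 * real j - 1" by linarith
    then have "x \<ge> (2 * real j - 1) / (2 * real n)" unfolding x_def bb_def using np
      by (intro divide_right_mono) auto
    then show ?thesis by simp
  next
    case False
    then have "m + 1 \<le> int j" by simp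
    then have h: "real_of_int (m + 1) \<le> real j" by (metis of_int_le_iff of_int_of_nat_eq)
    have "(2*real_of_int (m+1) - 1)/(2*real n) \<le> (2*real j - 1)/(2*real n)"
      by (rule divide_right_mono) (use h in auto)
    then show ?thesis unfolding y_def bb_def by simp
  qed
  have c4: "y + (2 * real j - 1) / (2 * real n) \<le> 0 \<or> 0 \<le> x + (2 * real j - 1) / (2 * real n)" for j
  proof (cases "m + int j \<ge> 1")
    case True
    then have "2 * real_of_int m - 1 + (2 * real j - 1) \<ge> 0" by linarith
    then have "0 \<le> (2 * real_of_int m - 1 + (2 * real j - 1)) / (2 * real n)"
      using np by (intro divide_nonneg_pos) auto
    moreover have "x + (2 * real j - 1) / (2 * real n) = (2 * real_of_int m - 1 + (2 * real j - 1)) / (2 * real n)"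
      unfolding x_def bb_def by (simp add: add_divide_distrib[symmetric] algebra_simps)
    ultimately show ?thesis by simp
  next
    case False
    then have "m + 1 + int j \<le> 1" by simp
    then have "real_of_int (m + 1) + real j \<le> 1" by (metis of_int_le_iff of_int_of_nat_eq of_int_add of_int_1)
    then have "2 * real_of_int (m+1) - 1 + (2 * real j - 1) \<le> 0" by simp
    then have "(2 * real_of_int (m+1) - 1 + (2 * real j - 1)) / (2 * real n) \<le> 0"
      using np by (intro divide_nonpos_pos) auto
    moreover have "y + (2 * real j - 1) / (2 * real n) = (2 * real_of_int (m+1) - 1 + (2 * real j - 1)) / (2 * real n)"
      unfolding y_def bb_def by (simp add: add_divide_distrib[symmetric] algebra_simps)
    ultimately show ?thesis by simp
  qed
  let ?z = "(1-l)*x + l*y"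
  have s: "(\<Sum>j=1..n. (-1) ^ (j + n + 1) * pos_part (?z - (2 * real j - 1) / (2 * real n))
       + (-1) ^ (j + n) * pos_part (?z + (2 * real j - 1) / (2 * real n)))
    = (1-l) * (\<Sum>j=1..n. (-1) ^ (j + n + 1) * pos_part (x - (2 * real j - 1) / (2 * real n))
       + (-1) ^ (j + n) * pos_part (x + (2 * real j - 1) / (2 * real n)))
    + l * (\<Sum>j=1..n. (-1) ^ (j + n + 1) * pos_part (y - (2 * real j - 1) / (2 * real n))
       + (-1) ^ (j + n) * pos_part (y + (2 * real j - 1) / (2 * real n)))"
    unfolding sum_distrib_left sum.distrib[symmetric]
    apply (rule sum.cong[OF refl])
    unfolding pp_conv[OF l xy c4] pp_conv'[OF l xy c3] by (simp add: algebra_simps)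
  show ?thesis
    unfolding x_def[symmetric] y_def[symmetric] psi_def s
    unfolding pp_conv[OF l xy c2] pp_conv'[OF l xy c1] by (simp add: algebra_simps)
qed



definition G :: "int \<Rightarrow> nat \<Rightarrow> int" where
  "G m j = max (m + int j - 1) 0 - max (m - int j) 0"

lemma sumG1: "int M \<le> m \<Longrightarrow> (\<Sum>j=1..M. (-1)^j * G m j) = (-1)^M * int M"
proof (induction M)
  case 0 then show ?case by simp
next
  case (Suc M)
  have g: "G m (Suc M) = 2 * int M + 1" using Suc.prems unfolding G_def by simp
  show ?case using Suc by (simp add: g algebra_simps)
qed

lemma sumG2: "int M \<le> 1 - m \<Longrightarrow> (\<Sum>j=1..M. (-1)^j * G m j) = 0"
proof (induction M)
  case 0 then show ?case by simp
next
  case (Suc M)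
  have g: "G m (Suc M) = 0" using Suc.prems unfolding G_def by simp
  show ?case using Suc by (simp add: g)
qed

lemma sumG: "int N \<ge> m \<Longrightarrow> int N \<ge> 1 - m \<Longrightarrow>
  4 * (-1)^N * (\<Sum>j=1..N. (-1)^j * G m j) = (-1)^nat(m + int N) + 2*m - 1 + 2*int N"
proof (induction N)
  case 0 then show ?case by simp
next
  case (Suc N)
  show ?case
  proof (cases "int N \<ge> m \<and> int N \<ge> 1 - m")
    case True
    have IH: "4 * (-1)^N * (\<Sum>j=1..N. (-1)^j * G m j) = (-1)^nat(m + int N) + 2*m - 1 + 2*int N"
      using Suc.IH True by blast
    have g: "G m (Suc N) = m + int N" using True unfolding G_def by simp
    have nn: "nat (m + int (Suc N)) = Suc (nat (m + int N))" using True by (simp add: Suc_nat_eq_nat_zadd1 add.commute add.left_commute)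
    have "4 * (-1)^(Suc N) * (\<Sum>j=1..Suc N. (-1)^j * G m j)
        = - (4 * (-1)^N * (\<Sum>j=1..N. (-1)^j * G m j)) + 4 * (m + int N)"
      by (simp add: g algebra_simps)
    also have "\<dots> = (-1)^nat(m + int (Suc N)) + 2*m - 1 + 2*int (Suc N)"
      unfolding IH nn by simp
    finally show ?thesis .
  next
    case False
    then consider "int (Suc N) = m" "m \<ge> 1" | "int (Suc N) = 1 - m" "m \<le> 0" using Suc.prems by linarith
    then show ?thesis
    proof cases
      case 1
      have "(\<Sum>j=1..Suc N. (-1)^j * G m j) = (-1)^(Suc N) * int (Suc N)"
        using 1 by (intro sumG1) simp
      moreover have "nat (m + int (Suc N)) = 2 * Suc N" using 1 by simp
      ultimately show ?thesis using 1 by (simp add: power_mult_distrib[symmetric] power_add[symmetric])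
    next
      case 2
      have "(\<Sum>j=1..Suc N. (-1)^j * G m j) = 0"
        using 2 by (intro sumG2) simp
      moreover have "nat (m + int (Suc N)) = 1" using 2 by simp
      ultimately show ?thesis using 2 by simp
    qed
  qed
qed



lemma pos_part_div: "r > 0 \<Longrightarrow> pos_part (a / r) = pos_part a / r"
  unfolding pos_part_def by (auto simp: max_def field_simps)

lemma psi_b:
  assumes n: "n \<ge> 1" and m: "1 - int n \<le> m" "m \<le> int n"
  shows "psi n (bb n m) = (-1)^nat(m + int n)"
proof -
  define u where "u = bb n m"
  have np: "real n > 0" using n by simp
  have mr: "1 - real n \<le> real_of_int m" "real_of_int m \<le> real n" using m by linarith+
  have u1: "pos_part (u + 1) = u + 1"
  proof -
    have "2 * real_of_int m - 1 \<ge> - 2 * real n" using mr by simp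
    then have "u \<ge> -1" unfolding u_def bb_def using np by (simp add: field_simps)
    then show ?thesis unfolding pos_part_def by simp
  qed
  have u2: "pos_part (u - 1) = 0"
  proof -
    have "2 * real_of_int m - 1 \<le> 2 * real n" using mr by simp
    then have "u \<le> 1" unfolding u_def bb_def using np by (simp add: field_simps)
    then show ?thesis unfolding pos_part_def by simp
  qed
  have trm: "(-1) ^ (j + n + 1) * pos_part (u - (2 * real j - 1) / (2 * real n))
       + (-1) ^ (j + n) * pos_part (u + (2 * real j - 1) / (2 * real n))
       = (-1)^n / real n * ((-1)^j * real_of_int (G m j))" for j
  proof -
    have a: "u - (2 * real j - 1) / (2 * real n) = real_of_int (m - int j) / real n"
      unfolding u_def bb_def using np by (simp add: field_simps)
    have b: "u + (2 * real j - 1) / (2 * real n) = real_of_int (m + int j - 1) / real n"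
      unfolding u_def bb_def using np by (simp add: field_simps)
    have pk: "pos_part (real_of_int k) = real_of_int (max k 0)" for k
      unfolding pos_part_def by simp
    show ?thesis unfolding a b pos_part_div[OF np] pk G_def
      by (simp add: power_add field_simps) (simp add: diff_divide_distrib)
  qed
  have S: "(\<Sum>j=1..n. (-1) ^ (j + n + 1) * pos_part (u - (2 * real j - 1) / (2 * real n))
       + (-1) ^ (j + n) * pos_part (u + (2 * real j - 1) / (2 * real n)))
     = (-1)^n / real n * real_of_int (\<Sum>j=1..n. (-1)^j * G m j)"
    unfolding trm sum_distrib_left[symmetric] by simp
  have key: "real_of_int (4 * (-1)^n * (\<Sum>j=1..n. (-1)^j * G m j))
      = real_of_int ((-1)^nat(m + int n) + 2*m - 1 + 2*int n)"
    using sumG[of m n] m by simp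
  have key': "4 * (-1)^n * real_of_int (\<Sum>j=1..n. (-1)^j * G m j)
      = (-1)^nat(m + int n) + 2*real_of_int m - 1 + 2*real n"
    using key by simp
  have "psi n u = - 2 * real n * (u + 1) + 4 * real n * ((-1)^n / real n * real_of_int (\<Sum>j=1..n. (-1)^j * G m j))"
    unfolding psi_def u1 u2 S by simp
  also have "\<dots> = - 2 * real n * (u + 1) + 4 * (-1)^n * real_of_int (\<Sum>j=1..n. (-1)^j * G m j)"
    using np by simp
  also have "\<dots> = (-1)^nat(m + int n)"
    unfolding key' u_def bb_def using np by (simp add: field_simps)
  finally show ?thesis unfolding u_def .
qed



lemma bb_Suc: "n \<ge> 1 \<Longrightarrow> bb n (m+1) = bb n m + 1 / real n"
  unfolding bb_def by (simp add: field_simps)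

lemma psi_lin:
  assumes n: "n \<ge> 1" and m: "1 - int n \<le> m" "m \<le> int n - 1"
    and u: "bb n m \<le> u" "u \<le> bb n m + 1 / real n"
  shows "(-1)^nat(m + int n) * psi n u = 1 - 2 * ((u - bb n m) * real n)"
proof -
  define l where "l = (u - bb n m) * real n"
  define \<sigma> :: real where "\<sigma> = (-1)^nat(m + int n)"
  have np: "real n > 0" using n by simp
  have l: "0 \<le> l" "l \<le> 1" unfolding l_def using u np by (auto simp: field_simps)
  have ueq: "u = (1-l)*bb n m + l*bb n (m+1)"
    unfolding bb_Suc[OF n] l_def using np by (simp add: field_simps)
  have s1: "psi n (bb n m) = \<sigma>" unfolding \<sigma>_def using psi_b[OF n] m by simp
  have nn: "nat (m + 1 + int n) = Suc (nat (m + int n))" using m by linarith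
  have s2: "psi n (bb n (m+1)) = - \<sigma>" unfolding \<sigma>_def using psi_b[OF n, of "m+1"] m nn by simp
  have ss: "\<sigma> * \<sigma> = 1" unfolding \<sigma>_def by (simp add: power_mult_distrib[symmetric])
  have "\<sigma> * psi n u = \<sigma> * ((1-l) * \<sigma> + l * (-\<sigma>))"
    unfolding ueq psi_conv[OF n m l] s1 s2 ..
  also have "\<dots> = (1-l) * (\<sigma>*\<sigma>) - l * (\<sigma>*\<sigma>)" by (simp add: algebra_simps)
  also have "\<dots> = 1 - 2*l" using ss by simp
  finally show ?thesis unfolding \<sigma>_def l_def .
qed

lemma psi_near1:
  assumes n: "n \<ge> 1" and m: "1 - int n \<le> m" "m \<le> int n - 1"
    and u: "bb n m \<le> u" "u \<le> bb n m + 1 / (4 * real n)"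
  shows "(-1)^nat(m + int n) * psi n u \<ge> 1/2"
proof -
  have np: "real n > 0" using n by simp
  have "u \<le> bb n m + 1 / real n" using u np by (smt (verit) divide_left_mono mult_pos_pos)
  note e = psi_lin[OF n m u(1) this]
  have "(u - bb n m) * real n \<le> 1/4" using u np by (simp add: field_simps)
  then show ?thesis unfolding e by simp
qed

lemma psi_near2:
  assumes n: "n \<ge> 1" and m: "1 - int n \<le> m" "m \<le> int n - 1"
    and u: "bb n m + 3 / (4 * real n) \<le> u" "u \<le> bb n m + 1 / real n"
  shows "(-1)^nat(m + int n) * psi n u \<le> -1/2"
proof -
  have np: "real n > 0" using n by simp
  have "bb n m \<le> u" using u np by (smt (verit) divide_nonneg_pos)
  note e = psi_lin[OF n m this u(2)]
  have "(u - bb n m) * real n \<ge> 3/4" using u np by (simp add: field_simps)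
  then show ?thesis unfolding e by simp
qed



definition pmono :: "real poly \<Rightarrow> real \<Rightarrow> real \<Rightarrow> bool" where
  "pmono p a b = ((\<forall>x y. a \<le> x \<longrightarrow> x \<le> y \<longrightarrow> y \<le> b \<longrightarrow> poly p x \<le> poly p y) \<or>
                  (\<forall>x y. a \<le> x \<longrightarrow> x \<le> y \<longrightarrow> y \<le> b \<longrightarrow> poly p y \<le> poly p x))"

lemma sq_ge: "1/2 \<le> (x::real) \<or> x \<le> -1/2 \<Longrightarrow> 1/4 \<le> x^2"
proof -
  assume "1/2 \<le> (x::real) \<or> x \<le> -1/2"
  then have "\<bar>1/2\<bar> \<le> \<bar>x\<bar>" by auto
  then have "(1/2)^2 \<le> x^2" by (simp only: abs_le_square_iff)
  then show ?thesis by (simp add: power2_eq_square)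
qed

lemma unit_window:
  fixes g f :: "real \<Rightarrow> real" and \<beta> \<delta> :: real
  assumes \<delta>: "\<delta> > 0"
    and W1: "\<And>t. \<beta> \<le> t \<Longrightarrow> t \<le> \<beta>+\<delta> \<Longrightarrow> g t \<le> -1/2"
    and W2: "\<And>t. \<beta>+3*\<delta> \<le> t \<Longrightarrow> t \<le> \<beta>+4*\<delta> \<Longrightarrow> g t \<ge> 1/2"
    and W3: "\<And>t. \<beta>+4*\<delta> \<le> t \<Longrightarrow> t \<le> \<beta>+5*\<delta> \<Longrightarrow> g t \<ge> 1/2"
    and W4: "\<And>t. \<beta>+7*\<delta> \<le> t \<Longrightarrow> t \<le> \<beta>+8*\<delta> \<Longrightarrow> g t \<le> -1/2"
    and mono: "(\<forall>x y. \<beta> \<le> x \<longrightarrow> x \<le> y \<longrightarrow> y \<le> \<beta>+8*\<delta> \<longrightarrow> f x \<le> f y) \<or>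
               (\<forall>x y. \<beta> \<le> x \<longrightarrow> x \<le> y \<longrightarrow> y \<le> \<beta>+8*\<delta> \<longrightarrow> f y \<le> f x)"
  shows "\<exists>a. \<beta> \<le> a \<and> a + \<delta> \<le> \<beta> + 8*\<delta> \<and> (\<forall>t. a < t \<and> t < a + \<delta> \<longrightarrow> 1/4 \<le> (g t - f t)^2)"
  using mono
proof
  assume inc: "\<forall>x y. \<beta> \<le> x \<longrightarrow> x \<le> y \<longrightarrow> y \<le> \<beta>+8*\<delta> \<longrightarrow> f x \<le> f y"
  define v where "v = f (\<beta>+5*\<delta>)"
  show ?thesis
  proof (cases "v \<le> 0")
    case True
    show ?thesis
    proof (intro exI[of _ "\<beta>+4*\<delta>"] conjI allI impI)
      fix t assume t: "\<beta>+4*\<delta> < t \<and> t < \<beta>+4*\<delta> + \<delta>"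
      have "f t \<le> v" unfolding v_def using inc t \<delta> by auto
      moreover have "g t \<ge> 1/2" using W3 t by auto
      ultimately show "1/4 \<le> (g t - f t)^2" using True by (intro sq_ge) auto
    qed (use \<delta> in auto)
  next
    case False
    show ?thesis
    proof (intro exI[of _ "\<beta>+7*\<delta>"] conjI allI impI)
      fix t assume t: "\<beta>+7*\<delta> < t \<and> t < \<beta>+7*\<delta> + \<delta>"
      have "v \<le> f t" unfolding v_def using inc t \<delta> by auto
      moreover have "g t \<le> -1/2" using W4 t by auto
      ultimately show "1/4 \<le> (g t - f t)^2" using False by (intro sq_ge) auto
    qed (use \<delta> in auto)
  qed
next
  assume dec: "\<forall>x y. \<beta> \<le> x \<longrightarrow> x \<le> y \<longrightarrow> y \<le> \<beta>+8*\<delta> \<longrightarrow> f y \<le> f x"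
  define v where "v = f (\<beta>+\<delta>)"
  show ?thesis
  proof (cases "v \<ge> 0")
    case True
    show ?thesis
    proof (intro exI[of _ "\<beta>"] conjI allI impI)
      fix t assume t: "\<beta> < t \<and> t < \<beta> + \<delta>"
      have "v \<le> f t" unfolding v_def using dec t \<delta> by auto
      moreover have "g t \<le> -1/2" using W1 t by auto
      ultimately show "1/4 \<le> (g t - f t)^2" using True by (intro sq_ge) auto
    qed (use \<delta> in auto)
  next
    case False
    show ?thesis
    proof (intro exI[of _ "\<beta>+3*\<delta>"] conjI allI impI)
      fix t assume t: "\<beta>+3*\<delta> < t \<and> t < \<beta>+3*\<delta> + \<delta>"
      have "f t \<le> v" unfolding v_def using dec t \<delta> by auto
      moreover have "g t \<ge> 1/2" using W2 t by auto
      ultimately show "1/4 \<le> (g t - f t)^2" using False by (intro sq_ge) auto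
    qed (use \<delta> in auto)
  qed
qed

lemma poly_mono_noroot:
  fixes p :: "real poly"
  assumes nr: "\<And>x. a < x \<Longrightarrow> x < b \<Longrightarrow> poly (pderiv p) x \<noteq> 0"
  shows "pmono p a b"
proof -
  have sgn: "(\<forall>x. a < x \<and> x < b \<longrightarrow> poly (pderiv p) x > 0) \<or> (\<forall>x. a < x \<and> x < b \<longrightarrow> poly (pderiv p) x < 0)"
  proof (rule ccontr)
    assume "\<not> ?thesis"
    then obtain x1 x2 where x1: "a < x1" "x1 < b" "poly (pderiv p) x1 \<le> 0"
      and x2: "a < x2" "x2 < b" "poly (pderiv p) x2 \<ge> 0" by (auto simp: not_less)
    have x1': "poly (pderiv p) x1 < 0" using x1 nr[of x1] by force
    have x2': "poly (pderiv p) x2 > 0" using x2 nr[of x2] by force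
    consider "x1 < x2" | "x2 < x1" using x1' x2' by (cases x1 x2 rule: linorder_cases) auto
    then show False
    proof cases
      case 1
      then obtain r where "x1 < r" "r < x2" "poly (pderiv p) r = 0" using poly_IVT_pos x1' x2' by blast
      then show False using nr[of r] x1 x2 by auto
    next
      case 2
      then obtain r where "x2 < r" "r < x1" "poly (pderiv p) r = 0" using poly_IVT_neg x1' x2' by blast
      then show False using nr[of r] x1 x2 by auto
    qed
  qed
  have diff: "\<exists>r. a < r \<and> r < b \<and> poly p y - poly p x = (y - x) * poly (pderiv p) r"
    if "a \<le> x" "x < y" "y \<le> b" for x y
  proof -
    obtain r where "x < r" "r < y" "poly p y - poly p x = (y - x) * poly (pderiv p) r"
      using poly_MVT \<open>x < y\<close> by blast
    then show ?thesis using that by (intro exI[of _ r]) auto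
  qed
  from sgn show ?thesis
  proof
    assume pos: "\<forall>x. a < x \<and> x < b \<longrightarrow> poly (pderiv p) x > 0"
    have "poly p x \<le> poly p y" if h: "a \<le> x" "x \<le> y" "y \<le> b" for x y
    proof (cases "x = y")
      case False
      then obtain r where r: "a < r" "r < b" "poly p y - poly p x = (y - x) * poly (pderiv p) r"
        using diff[of x y] h by force
      have "0 \<le> (y - x) * poly (pderiv p) r" using pos r h by (intro mult_nonneg_nonneg) auto
      then show ?thesis using r by simp
    qed simp
    then show ?thesis unfolding pmono_def by blast
  next
    assume neg: "\<forall>x. a < x \<and> x < b \<longrightarrow> poly (pderiv p) x < 0"
    have "poly p y \<le> poly p x" if h: "a \<le> x" "x \<le> y" "y \<le> b" for x y
    proof (cases "x = y")
      case False
      then obtain r where r: "a < r" "r < b" "poly p y - poly p x = (y - x) * poly (pderiv p) r"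
        using diff[of x y] h by force
      have "(y - x) * poly (pderiv p) r \<le> 0" using neg r h by (intro mult_nonneg_nonpos) auto
      then show ?thesis using r by simp
    qed simp
    then show ?thesis unfolding pmono_def by blast
  qed
qed



lemma count_good:
  fixes p :: "real poly" and x :: "nat \<Rightarrow> real"
  assumes inc: "\<And>k. x k < x (Suc k)"
  shows "K \<le> card {k \<in> {..<K}. pmono p (x k) (x (Suc k))} + (degree p - 1)"
proof -
  define Good where "Good = {k \<in> {..<K}. pmono p (x k) (x (Suc k))}"
  define Bad where "Bad = {..<K} - Good"
  have fin: "finite Good" "finite Bad" unfolding Good_def Bad_def by auto
  have cardK: "card Good + card Bad = K"
  proof -
    have "Good \<union> Bad = {..<K}" "Good \<inter> Bad = {}" unfolding Good_def Bad_def by auto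
    then show ?thesis using card_Un_disjoint[OF fin] by simp
  qed
  have "card Bad \<le> degree p - 1"
  proof (cases "pderiv p = 0")
    case True
    then obtain h where "p = [:h:]" using pderiv_iszero by blast
    then have "pmono p a b" for a b unfolding pmono_def by simp
    then have "Bad = {}" unfolding Bad_def Good_def by auto
    then show ?thesis by simp
  next
    case False
    have ex: "\<exists>r. x k < r \<and> r < x (Suc k) \<and> poly (pderiv p) r = 0" if "k \<in> Bad" for k
    proof (rule ccontr)
      assume "\<not> ?thesis"
      then have "pmono p (x k) (x (Suc k))" by (intro poly_mono_noroot) auto
      then show False using that unfolding Bad_def Good_def by auto
    qed
    then obtain rf where rf: "\<And>k. k \<in> Bad \<Longrightarrow> x k < rf k \<and> rf k < x (Suc k) \<and> poly (pderiv p) (rf k) = 0"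
      by metis
    have sm: "strict_mono x" using inc by (simp add: strict_mono_Suc_iff)
    have inj: "inj_on rf Bad"
    proof (rule inj_onI, rule ccontr)
      fix k k' assume k: "k \<in> Bad" "k' \<in> Bad" "rf k = rf k'" "k \<noteq> k'"
      show False
      proof (cases "k < k'")
        case True
        then have "x (Suc k) \<le> x k'" using sm by (simp add: strict_mono_less_eq)
        then show False using rf[OF k(1)] rf[OF k(2)] k(3) by linarith
      next
        case False
        then have "k' < k" using k(4) by simp
        then have "x (Suc k') \<le> x k" using sm by (simp add: strict_mono_less_eq)
        then show False using rf[OF k(1)] rf[OF k(2)] k(3) by linarith
      qed
    qed
    have sub: "rf ` Bad \<subseteq> {r. poly (pderiv p) r = 0}" using rf by auto
    have "card Bad = card (rf ` Bad)" using card_image[OF inj] by simp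
    also have "\<dots> \<le> card {r. poly (pderiv p) r = 0}"
      by (intro card_mono poly_roots_finite False sub)
    also have "\<dots> \<le> degree (pderiv p)" by (intro card_poly_roots_bound False)
    also have "\<dots> = degree p - 1" by (simp add: degree_pderiv)
    finally show ?thesis .
  qed
  then show ?thesis using cardK unfolding Good_def by simp
qed



definition Cd :: "nat \<Rightarrow> real" where
  "Cd d = Gamma (real d / 2) / (sqrt pi * Gamma ((real d - 1) / 2))"

lemma Gp1: "(z::real) > 0 \<Longrightarrow> Gamma (z + 1) = z * Gamma z"
  by (rule Gamma_plus1) (auto dest: nonpos_Ints_nonpos)

lemma Cd_bound:
  assumes d: "d \<ge> 2"
  shows "Cd d \<ge> sqrt (real d) / sqrt (8 * pi)"
proof -
  define x where "x = (real d - 1) / 2"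
  have x0: "x > 0" unfolding x_def using d by simp
  have "(ln \<circ> Gamma) ((1 - 1/2) *\<^sub>R (x + 1/2) + (1/2) *\<^sub>R (x + 3/2))
        \<le> (1 - 1/2) * (ln \<circ> Gamma) (x + 1/2) + (1/2) * (ln \<circ> Gamma) (x + 3/2)"
    by (rule convex_onD[OF log_convex_Gamma_real]) (use x0 in auto)
  moreover have "(1 - 1/2) *\<^sub>R (x + 1/2) + (1/2) *\<^sub>R (x + 3/2) = x + 1" by (simp add: field_simps)
  ultimately have "ln (Gamma (x+1)) \<le> (ln (Gamma (x + 1/2)) + ln (Gamma (x + 3/2))) / 2" by simp
  moreover have gp: "Gamma (x + 1/2) > 0" "Gamma (x + 3/2) > 0" "Gamma (x+1) > 0" using x0 by auto
  ultimately have "2 * ln (Gamma (x+1)) \<le> ln (Gamma (x + 1/2) * Gamma (x + 3/2))"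
    by (simp add: ln_mult)
  then have "ln (Gamma (x+1) ^ 2) \<le> ln (Gamma (x + 1/2) * Gamma (x + 3/2))"
    using gp by (simp add: ln_realpow)
  then have h: "Gamma (x+1) ^ 2 \<le> Gamma (x + 1/2) * Gamma (x + 3/2)"
    using gp by (subst (asm) ln_le_cancel_iff) auto
  have e1: "Gamma (x+1) = x * Gamma x" using Gp1 x0 by simp
  have e2: "Gamma (x + 3/2) = (x + 1/2) * Gamma (x + 1/2)"
    using Gp1[of "x + 1/2"] x0 by (simp add: add.assoc)
  have xh: "x + 1/2 = real d / 2" unfolding x_def by (simp add: field_simps)
  have main: "x^2 * Gamma x ^ 2 \<le> (real d / 2) * Gamma (real d / 2) ^ 2"
    using h unfolding e1 e2 xh by (simp add: power_mult_distrib power2_eq_square algebra_simps)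
  have gx: "Gamma x > 0" using x0 by simp
  have gd: "Gamma (real d / 2) > 0" using d by simp
  have "real d / (8 * pi) \<le> x^2 / (real d / 2 * pi)"
  proof -
    have d2: "real d \<ge> 2" using d by simp
    have "real d \<le> 2 * (real d - 1)" using d2 by simp
    then have "real d * real d \<le> (2 * (real d - 1)) * (2 * (real d - 1))"
      using d2 by (intro mult_mono) auto
    then have "real d * (real d / 2) \<le> 8 * x^2" unfolding x_def power2_eq_square by (simp add: field_simps)
    then show ?thesis using d pi_gt3 by (simp add: field_simps)
  qed
  also have "\<dots> \<le> Gamma (real d / 2) ^ 2 / (pi * Gamma x ^ 2)"
    using main gx d pi_gt3 by (simp add: field_simps)
  also have "\<dots> = Cd d ^ 2" unfolding Cd_def x_def by (simp add: power_divide power_mult_distrib)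
  finally have "real d / (8 * pi) \<le> Cd d ^ 2" .
  moreover have "Cd d \<ge> 0" unfolding Cd_def using gd x0 unfolding x_def by simp
  ultimately have "sqrt (real d / (8 * pi)) \<le> Cd d" by (simp add: real_le_lsqrt)
  then show ?thesis by (simp add: real_sqrt_divide)
qed



lemma mu_dens_Cd: "mu_dens d t = Cd d * (1 - t\<^sup>2) powr ((real d - 3) / 2)"
  unfolding mu_dens_def Cd_def ..

lemma Cd_nonneg: "d \<ge> 2 \<Longrightarrow> Cd d \<ge> 0"
  unfolding Cd_def by (intro divide_nonneg_pos mult_pos_pos less_imp_le Gamma_real_pos) auto

lemma dens_nonneg: "d \<ge> 2 \<Longrightarrow> mu_dens d t \<ge> 0"
  unfolding mu_dens_Cd using Cd_nonneg by simp

lemma dens_lower: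
  assumes d: "d \<ge> 3" and t: "t\<^sup>2 \<le> 1 / real d"
  shows "mu_dens d t \<ge> Cd d / 2"
proof -
  define b where "b = 1 - t\<^sup>2"
  define K where "K = d div 2"
  have dr: "real d \<ge> 3" using d by simp
  have "1 / real d \<le> 1/3" using dr by (intro divide_left_mono) auto
  then have t2: "t\<^sup>2 \<le> 1/3" using t by linarith
  have b: "0 < b" "b \<le> 1" unfolding b_def using t2 by auto
  have K1: "(real d - 3) / 2 \<le> real K"
  proof -
    have "d \<le> 2 * K + 1" unfolding K_def by presburger
    then have "real d \<le> real (2 * K + 1)" by (simp only: of_nat_le_iff)
    then have "real d \<le> 2 * real K + 1" by simp
    then show ?thesis by simp
  qed
  have "2 * K \<le> d" unfolding K_def by presburger
  then have "real (2 * K) \<le> real d" by (simp only: of_nat_le_iff)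
  then have K2: "2 * real K \<le> real d" by simp
  have "b powr real K \<le> b powr ((real d - 3) / 2)" by (rule powr_mono'[OF K1]) (use b in auto)
  moreover have "b powr real K = b ^ K" using b by (simp add: powr_realpow)
  moreover have "1 + real K * (- t\<^sup>2) \<le> (1 + (- t\<^sup>2)) ^ K"
    by (rule Bernoulli_inequality) (use t2 in auto)
  moreover have "real K * t\<^sup>2 \<le> 1/2"
  proof -
    have "real K * t\<^sup>2 \<le> (real d / 2) * (1 / real d)"
      using K2 t by (intro mult_mono) auto
    then show ?thesis using dr by simp
  qed
  ultimately have "1/2 \<le> b powr ((real d - 3) / 2)" unfolding b_def by simp
  then have "Cd d * (1/2) \<le> Cd d * b powr ((real d - 3) / 2)"
    using Cd_nonneg[of d] d by (intro mult_left_mono) auto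
  then show ?thesis unfolding mu_dens_Cd b_def by simp
qed

lemma dens_cont:
  assumes d: "d \<ge> 4" shows "continuous_on {-1..1} (mu_dens d)"
proof -
  have e: "(real d - 3) / 2 > 0" using d by simp
  have sq: "x\<^sup>2 \<le> 1" if "x \<in> {-1..1}" for x :: real
  proof -
    have "\<bar>x\<bar> \<le> 1" using that by auto
    then show ?thesis by (simp add: abs_square_le_1)
  qed
  have "continuous_on {-1..1} (\<lambda>t::real. (1 - t\<^sup>2) powr ((real d - 3) / 2))"
  proof (rule continuous_on_powr')
    show "continuous_on {-1..1} (\<lambda>t::real. 1 - t\<^sup>2)" by (intro continuous_intros)
    show "continuous_on {-1..1} (\<lambda>t::real. (real d - 3) / 2)" by (intro continuous_intros)
    show "\<forall>x::real\<in>{-1..1}. 0 \<le> 1 - x\<^sup>2 \<and> (1 - x\<^sup>2 = 0 \<longrightarrow> 0 < (real d - 3) / 2)"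
      using e sq by force
  qed
  then show ?thesis unfolding mu_dens_Cd[abs_def] by (rule continuous_on_mult[OF continuous_on_const])
qed

lemma window_sum:
  fixes F :: "real \<Rightarrow> real" and a :: "nat \<Rightarrow> real"
  assumes int: "integrable lborel F" and nonneg: "\<And>t. F t \<ge> 0" and fin: "finite S"
    and \<delta>: "\<delta> > 0" and c: "c \<ge> 0"
    and disj: "\<And>k k'. k \<in> S \<Longrightarrow> k' \<in> S \<Longrightarrow> k \<noteq> k' \<Longrightarrow> {a k<..<a k+\<delta>} \<inter> {a k'<..<a k'+\<delta>} = {}"
    and low: "\<And>k t. k \<in> S \<Longrightarrow> a k < t \<Longrightarrow> t < a k + \<delta> \<Longrightarrow> c \<le> F t"
  shows "real (card S) * c * \<delta> \<le> integral\<^sup>L lborel F"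
proof -
  define H where "H t = (\<Sum>k\<in>S. c * indicator {a k<..<a k+\<delta>} t)" for t :: real
  have intH: "integrable lborel H" unfolding H_def
    by (intro Bochner_Integration.integrable_sum integrable_mult_right) (auto intro!: integrable_real_indicator simp: less_imp_le[OF \<delta>])
  have "integral\<^sup>L lborel H = (\<Sum>k\<in>S. c * measure lborel {a k<..<a k+\<delta>})"
    unfolding H_def
    by (subst Bochner_Integration.integral_sum) (auto intro!: integrable_mult_right integrable_real_indicator simp: less_imp_le[OF \<delta>])
  also have "\<dots> = real (card S) * c * \<delta>" using \<delta> by simp
  finally have eq: "integral\<^sup>L lborel H = real (card S) * c * \<delta>" .
  have le: "H t \<le> F t" for t
  proof (cases "\<exists>k\<in>S. t \<in> {a k<..<a k+\<delta>}")
    case True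
    then obtain k0 where k0: "k0 \<in> S" "t \<in> {a k0<..<a k0+\<delta>}" by blast
    have "H t = c * indicator {a k0<..<a k0+\<delta>} t + (\<Sum>k\<in>S-{k0}. c * indicator {a k<..<a k+\<delta>} t)"
      unfolding H_def by (rule sum.remove[OF fin k0(1)])
    also have "(\<Sum>k\<in>S-{k0}. c * indicator {a k<..<a k+\<delta>} t) = 0"
    proof (intro sum.neutral ballI)
      fix k assume k: "k \<in> S - {k0}"
      then have "t \<notin> {a k<..<a k+\<delta>}" using disj[of k k0] k0 by auto
      then show "c * indicator {a k<..<a k+\<delta>} t = 0" by simp
    qed
    finally have "H t = c" using k0 by simp
    then show ?thesis using low k0 by auto
  next
    case False
    then have "H t = 0" unfolding H_def by (intro sum.neutral) auto
    then show ?thesis using nonneg by simp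
  qed
  have "integral\<^sup>L lborel H \<le> integral\<^sup>L lborel F"
    by (rule integral_mono[OF intH int]) (use le in auto)
  then show ?thesis using eq by simp
qed



lemma psi_cont: "continuous_on S (psi n)"
  unfolding psi_def[abs_def] pos_part_def by (intro continuous_intros)

lemma unit_signs:
  assumes n: "n \<ge> 2" and k: "k \<le> n - 2"
  defines "m \<equiv> 2 * int k + 1 - int n"
  defines "q \<equiv> 1 / (4 * real n)"
  shows "bb n m \<le> u \<Longrightarrow> u \<le> bb n m + q \<Longrightarrow> psi n u \<le> -1/2"
    and "bb n m + 3*q \<le> u \<Longrightarrow> u \<le> bb n m + 4*q \<Longrightarrow> psi n u \<ge> 1/2"
    and "bb n m + 4*q \<le> u \<Longrightarrow> u \<le> bb n m + 5*q \<Longrightarrow> psi n u \<ge> 1/2"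
    and "bb n m + 7*q \<le> u \<Longrightarrow> u \<le> bb n m + 8*q \<Longrightarrow> psi n u \<le> -1/2"
proof -
  have n1: "n \<ge> 1" using n by simp
  have np: "real n > 0" using n by simp
  have m1: "1 - int n \<le> m" "m \<le> int n - 1" unfolding m_def using k n by auto
  have m2: "1 - int n \<le> m + 1" "m + 1 \<le> int n - 1" unfolding m_def using k n by auto
  have s1: "(-1::real)^nat(m + int n) = -1"
  proof -
    have "nat (m + int n) = 2*k+1" unfolding m_def by simp
    then show ?thesis by simp
  qed
  have s2: "(-1::real)^nat(m + 1 + int n) = 1"
  proof -
    have "nat (m + 1 + int n) = 2*(k+1)" unfolding m_def by simp
    then show ?thesis by (simp only: power_mult) simp
  qed
  have b1: "bb n (m+1) = bb n m + 4*q" unfolding bb_Suc[OF n1] q_def by simp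
  have q4: "4 * q = 1 / real n" unfolding q_def by simp
  show "bb n m \<le> u \<Longrightarrow> u \<le> bb n m + q \<Longrightarrow> psi n u \<le> -1/2"
    using psi_near1[OF n1 m1, of u] s1 unfolding q_def by simp
  show "bb n m + 3*q \<le> u \<Longrightarrow> u \<le> bb n m + 4*q \<Longrightarrow> psi n u \<ge> 1/2"
    using psi_near2[OF n1 m1, of u] s1 unfolding q4 by (simp add: q_def)
  show "bb n m + 4*q \<le> u \<Longrightarrow> u \<le> bb n m + 5*q \<Longrightarrow> psi n u \<ge> 1/2"
    using psi_near1[OF n1 m2, of u] s2 unfolding b1 by (simp add: q_def)
  show "bb n m + 7*q \<le> u \<Longrightarrow> u \<le> bb n m + 8*q \<Longrightarrow> psi n u \<le> -1/2"
    using psi_near2[OF n1 m2, of u] s2 unfolding b1 by (simp add: q_def)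
qed

lemma int_conv:
  assumes d: "d \<ge> 4" and f: "continuous_on UNIV f"
  shows "integral\<^sup>L (mu d) f = integral\<^sup>L lborel (\<lambda>t. (indicator {-1..1} t * mu_dens d t) * f t)"
proof -
  have fm: "f \<in> borel_measurable lborel" using borel_measurable_continuous_onI[OF f] by simp
  have dm: "mu_dens d \<in> borel_measurable borel"
    unfolding mu_dens_Cd[abs_def] by measurable
  have gm: "(\<lambda>t. indicator {-1..1} t * mu_dens d t) \<in> borel_measurable lborel"
    using dm by simp
  have "integral\<^sup>L (mu d) f = integral\<^sup>L lborel (\<lambda>t. (indicator {-1..1} t * mu_dens d t) *\<^sub>R f t)"
    unfolding mu_def
    by (rule integral_density[OF fm gm]) (use dens_nonneg[of d] d in auto)
  then show ?thesis by simp
qed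

lemma int_integrable:
  assumes d: "d \<ge> 4" and f: "continuous_on UNIV f"
  shows "integrable lborel (\<lambda>t. (indicator {-1..1} t * mu_dens d t) * f t)"
proof -
  have "continuous_on {-1..1} (\<lambda>t. mu_dens d t * f t)"
    using dens_cont[OF d] continuous_on_subset[OF f] by (intro continuous_intros) auto
  then have "integrable lborel (\<lambda>t. indicator {-1..1::real} t *\<^sub>R (mu_dens d t * f t))"
    by (intro borel_integrable_compact) auto
  then show ?thesis by (simp add: mult.assoc)
qed



lemma main_bound:
  assumes d: "d \<ge> 4" and p: "degree p < 2 * d"
  shows "1 / (96 * sqrt (8 * pi)) \<le> integral\<^sup>L (mu d) (\<lambda>t. (psi (3 * d) (sqrt (real d) * t) - poly p t)\<^sup>2)"
proof -
  define n where "n = 3 * d"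
  define s where "s = sqrt (real d)"
  define g where "g t = psi n (s * t)" for t
  define \<delta> where "\<delta> = 1 / (4 * real n * s)"
  define q where "q = 1 / (4 * real n)"
  define x where "x k = bb n (2 * int k + 1 - int n) / s" for k
  define F where "F t = (indicator {-1..1} t * mu_dens d t) * (g t - poly p t)\<^sup>2" for t
  have dr: "real d \<ge> 4" using d by simp
  have s0: "s > 0" unfolding s_def using d by simp
  have s1: "s \<ge> 1" unfolding s_def using dr by simp
  have n2: "n \<ge> 2" unfolding n_def using d by simp
  have np: "real n > 0" using n2 by simp
  have \<delta>0: "\<delta> > 0" unfolding \<delta>_def using np s0 by simp
  have sd: "s * \<delta> = q" unfolding \<delta>_def q_def using s0 by simp
  have gc: "continuous_on UNIV g" unfolding g_def[abs_def]
    by (rule continuous_on_compose2[OF psi_cont[of UNIV]]) (auto intro!: continuous_intros)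
  have fcont: "continuous_on UNIV (\<lambda>t. (g t - poly p t)\<^sup>2)"
    by (intro continuous_intros gc)
  have I: "integral\<^sup>L (mu d) (\<lambda>t. (psi (3 * d) (sqrt (real d) * t) - poly p t)\<^sup>2) = integral\<^sup>L lborel F"
    unfolding F_def using int_conv[OF d fcont] unfolding g_def n_def s_def by simp
  have Fint: "integrable lborel F" unfolding F_def using int_integrable[OF d fcont] .
  have Fnn: "F t \<ge> 0" for t unfolding F_def using dens_nonneg[of d] d by (simp add: indicator_def)
  have xS: "x (Suc k) = x k + 8 * \<delta>" for k
  proof -
    have "bb n (2 * int (Suc k) + 1 - int n) = bb n (2 * int k + 1 - int n) + 2 / real n"
      unfolding bb_def using np by (simp add: field_simps)
    then show ?thesis unfolding x_def \<delta>_def using s0 by (simp add: field_simps)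
  qed
  have xinc: "x k < x (Suc k)" for k using xS \<delta>0 by simp
  define Good where "Good = {k \<in> {..<n-1}. pmono p (x k) (x (Suc k))}"
  have cg: "n - 1 \<le> card Good + (degree p - 1)"
    unfolding Good_def by (rule count_good[of x, OF xinc])
  have cardG: "real (card Good) \<ge> real d + 1"
  proof -
    have "degree p - 1 \<le> 2 * d - 2" using p by simp
    then have "card Good \<ge> d + 1" using cg unfolding n_def using d by linarith
    then show ?thesis by simp
  qed
  have window: "\<exists>a. x k \<le> a \<and> a + \<delta> \<le> x k + 8 * \<delta> \<and> (\<forall>t. a < t \<and> t < a + \<delta> \<longrightarrow> 1/4 \<le> (g t - poly p t)\<^sup>2)"
    if kG: "k \<in> Good" for k
  proof -
    have kn: "k \<le> n - 2" using kG unfolding Good_def by auto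
    have mono: "pmono p (x k) (x k + 8 * \<delta>)" using kG unfolding Good_def xS by auto
    have sx: "s * x k = bb n (2 * int k + 1 - int n)" unfolding x_def using s0 by simp
    have tr: "s * (x k + c * \<delta>) = bb n (2 * int k + 1 - int n) + c * q" for c
      using sx sd by (simp add: algebra_simps)
    have lo: "bb n (2 * int k + 1 - int n) + c * q \<le> s * t" if "x k + c * \<delta> \<le> t" for c t
      using mult_left_mono[OF that less_imp_le[OF s0]] tr by simp
    have hi: "s * t \<le> bb n (2 * int k + 1 - int n) + c * q" if "t \<le> x k + c * \<delta>" for c t
      using mult_left_mono[OF that less_imp_le[OF s0]] tr by simp
    show ?thesis
    proof (rule unit_window[OF \<delta>0])
      fix t assume "x k \<le> t" "t \<le> x k + \<delta>"
      then show "g t \<le> -1/2" unfolding g_def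
        using unit_signs(1)[OF n2 kn, of "s*t"] lo[of 0 t] hi[of t 1] q_def by simp
    next
      fix t assume "x k + 3 * \<delta> \<le> t" "t \<le> x k + 4 * \<delta>"
      then show "g t \<ge> 1/2" unfolding g_def
        using unit_signs(2)[OF n2 kn, of "s*t"] lo[of 3 t] hi[of t 4] q_def by simp
    next
      fix t assume "x k + 4 * \<delta> \<le> t" "t \<le> x k + 5 * \<delta>"
      then show "g t \<ge> 1/2" unfolding g_def
        using unit_signs(3)[OF n2 kn, of "s*t"] lo[of 4 t] hi[of t 5] q_def by simp
    next
      fix t assume "x k + 7 * \<delta> \<le> t" "t \<le> x k + 8 * \<delta>"
      then show "g t \<le> -1/2" unfolding g_def
        using unit_signs(4)[OF n2 kn, of "s*t"] lo[of 7 t] hi[of t 8] q_def by simp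
    next
      show "(\<forall>xa y. x k \<le> xa \<longrightarrow> xa \<le> y \<longrightarrow> y \<le> x k + 8 * \<delta> \<longrightarrow> poly p xa \<le> poly p y) \<or>
            (\<forall>xa y. x k \<le> xa \<longrightarrow> xa \<le> y \<longrightarrow> y \<le> x k + 8 * \<delta> \<longrightarrow> poly p y \<le> poly p xa)"
        using mono unfolding pmono_def .
    qed
  qed
  then obtain a where a: "\<And>k. k \<in> Good \<Longrightarrow> x k \<le> a k \<and> a k + \<delta> \<le> x k + 8 * \<delta> \<and>
      (\<forall>t. a k < t \<and> t < a k + \<delta> \<longrightarrow> 1/4 \<le> (g t - poly p t)\<^sup>2)"
    by metis
  have range: "t\<^sup>2 \<le> 1 / real d" if "x k \<le> t" "t \<le> x k + 8 * \<delta>" "k \<le> n - 2" for k t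
  proof -
    define m where "m = 2 * int k + 1 - int n"
    have sx: "s * x k = bb n m" unfolding x_def m_def using s0 by simp
    have lo: "bb n m \<le> s * t" using mult_left_mono[OF that(1) less_imp_le[OF s0]] sx by simp
    have hi: "s * t \<le> bb n m + 8 * q" using mult_left_mono[OF that(2) less_imp_le[OF s0]] sx sd
      by (simp add: algebra_simps)
    have m1: "real_of_int m \<ge> 1 - real n" unfolding m_def by simp
    have m2: "real_of_int m \<le> real n - 3" unfolding m_def using that(3) n2 by linarith
    have "bb n m \<ge> -1" unfolding bb_def using m1 np by (simp add: field_simps)
    moreover have "bb n m + 8 * q \<le> 1" unfolding bb_def q_def using m2 np by (simp add: field_simps)
    ultimately have "\<bar>s * t\<bar> \<le> 1" using lo hi by auto
    then have "(s * t)\<^sup>2 \<le> 1" by (simp add: abs_square_le_1)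
    then have "real d * t\<^sup>2 \<le> 1" unfolding s_def using dr by (simp add: power_mult_distrib)
    then show ?thesis using dr by (simp add: field_simps)
  qed
  have Flow: "Cd d / 8 \<le> F t" if kG: "k \<in> Good" and t: "a k < t" "t < a k + \<delta>" for k t
  proof -
    have kn: "k \<le> n - 2" using kG unfolding Good_def by auto
    have t2: "t\<^sup>2 \<le> 1 / real d" using range[of k t] a[OF kG] t kn by auto
    have "1 / real d \<le> 1" using dr by simp
    then have "t\<^sup>2 \<le> 1" using t2 by linarith
    then have "\<bar>t\<bar> \<le> 1" by (simp add: abs_square_le_1)
    then have ind: "indicator {-1..1} t = (1::real)" by (auto simp: indicator_def)
    have de: "mu_dens d t \<ge> Cd d / 2" using dens_lower[OF _ t2] d by simp
    have sq: "1/4 \<le> (g t - poly p t)\<^sup>2" using a[OF kG] t by auto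
    have "Cd d / 2 * (1/4) \<le> mu_dens d t * (g t - poly p t)\<^sup>2"
      using de sq Cd_nonneg[of d] d by (intro mult_mono) auto
    then show ?thesis unfolding F_def ind by simp
  qed
  have disj: "{a k<..<a k+\<delta>} \<inter> {a k'<..<a k'+\<delta>} = {}"
    if "k \<in> Good" "k' \<in> Good" "k \<noteq> k'" for k k'
  proof -
    have sm: "strict_mono x" using xinc by (simp add: strict_mono_Suc_iff)
    have ord: "a i + \<delta> \<le> a j" if "i \<in> Good" "j \<in> Good" "i < j" for i j
    proof -
      have "x (Suc i) \<le> x j" using sm that(3) by (simp add: strict_mono_less_eq)
      then show ?thesis using a[OF that(1)] a[OF that(2)] xS[of i] by linarith
    qed
    show ?thesis
    proof (cases "k < k'")
      case True then show ?thesis using ord[OF that(1,2)] by auto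
    next
      case False then have "k' < k" using that(3) by simp
      then show ?thesis using ord[OF that(2,1)] by auto
    qed
  qed
  have finG: "finite Good" unfolding Good_def by auto
  have "real (card Good) * (Cd d / 8) * \<delta> \<le> integral\<^sup>L lborel F"
    by (rule window_sum[OF Fint Fnn finG \<delta>0 _ disj Flow]) (use Cd_nonneg[of d] d in auto)
  moreover have "1 / (96 * sqrt (8 * pi)) \<le> real (card Good) * (Cd d / 8) * \<delta>"
  proof -
    have Cd: "Cd d \<ge> s / sqrt (8 * pi)" unfolding s_def using Cd_bound[of d] d by simp
    have sp: "sqrt (8 * pi) > 0" by simp
    have "real d * (Cd d / 8) * \<delta> = Cd d / (96 * s)"
      unfolding \<delta>_def n_def using dr s0 by (simp add: field_simps)
    also have "\<dots> \<ge> (s / sqrt (8 * pi)) / (96 * s)"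
      using Cd s0 by (intro divide_right_mono) auto
    finally have "1 / (96 * sqrt (8 * pi)) \<le> real d * (Cd d / 8) * \<delta>" using s0 by simp
    also have "\<dots> \<le> real (card Good) * (Cd d / 8) * \<delta>"
      using cardG Cd_nonneg[of d] d \<delta>0 by (intro mult_right_mono) auto
    finally show ?thesis .
  qed
  ultimately show ?thesis unfolding I by linarith
qed

lemma const_bound: "1 / (5 * exp 1 * pi) \<le> sqrt (1 / (96 * sqrt (8 * pi)))"
proof -
  have e2: "exp 1 \<ge> (2::real)" using exp_ge_add_one_self[of 1] by simp
  have p3: "pi \<ge> 3" using pi_gt3 by simp
  have "8 * pi \<le> 36" using pi_less_4 by simp
  then have "sqrt (8 * pi) \<le> sqrt 36" by (rule real_sqrt_le_mono)
  moreover have "sqrt (36::real) = 6" by (simp add: real_sqrt_eq_iff)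
  ultimately have s6: "sqrt (8 * pi) \<le> 6" by simp
  have "(2::real) * 3 \<le> exp 1 * pi" using e2 p3 by (intro mult_mono) auto
  then have "(6::real) * 6 \<le> (exp 1 * pi) * (exp 1 * pi)" by (intro mult_mono) auto
  then have big: "96 * sqrt (8 * pi) \<le> 25 * (exp 1 * pi)^2" using s6 by (simp add: power2_eq_square)
  have pos: "0 < 96 * sqrt (8 * pi)" by simp
  have "(1 / (5 * exp 1 * pi))^2 = 1 / (25 * (exp 1 * pi)^2)" by (simp add: power2_eq_square field_simps)
  also have "\<dots> \<le> 1 / (96 * sqrt (8 * pi))" using big pos by (intro divide_left_mono) auto
  finally show ?thesis by (rule real_le_rsqrt)
qed

theorem lemma9:
  shows "\<exists>d0::nat. \<forall>d\<ge>d0.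
           A d (2 * d) (\<lambda>t. psi (3 * d) (sqrt (real d) * t)) \<ge> 1 / (5 * exp 1 * pi)"
proof (intro exI[of _ 4] allI impI)
  fix d :: nat assume d: "4 \<le> d"
  show "A d (2 * d) (\<lambda>t. psi (3 * d) (sqrt (real d) * t)) \<ge> 1 / (5 * exp 1 * pi)"
    unfolding A_def
  proof (rule cINF_greatest)
    have "(0 :: real poly) \<in> {p. degree p < 2 * d}" using d by simp
    then show "{p :: real poly. degree p < 2 * d} \<noteq> {}" by blast
  next
    fix p :: "real poly" assume "p \<in> {p. degree p < 2 * d}"
    then have "1 / (96 * sqrt (8 * pi)) \<le> integral\<^sup>L (mu d) (\<lambda>t. (psi (3 * d) (sqrt (real d) * t) - poly p t)\<^sup>2)"
      using main_bound[OF d] by simp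
    then have "sqrt (1 / (96 * sqrt (8 * pi))) \<le> sqrt (integral\<^sup>L (mu d) (\<lambda>t. (psi (3 * d) (sqrt (real d) * t) - poly p t)\<^sup>2))"
      by (rule real_sqrt_le_mono)
    then show "1 / (5 * exp 1 * pi) \<le> sqrt (integral\<^sup>L (mu d) (\<lambda>t. (psi (3 * d) (sqrt (real d) * t) - poly p t)\<^sup>2))"
      using const_bound by linarith
  qed
qed

end
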